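(* Let $n$ and $m$ be positive odd integers. Then \[ \int_{-1}^{1}\frac{\sin\bigl(n\sin^{-1}\sqrt t\bigr)\sinh\bigl(m\sinh^{-1}\sqrt t\bigr)}{\cos\bigl(2n\sin^{-1}\sqrt t\bigr)+\cosh\bigl(2m\sinh^{-1}\sqrt t\bigr)}\,\frac{t^j\,dt}{\sqrt{1-t^2}}=\begin{cases}\pi/2, & j=-1,\\ 0, & j=0,1,\ldots,\frac{m+n-2}{2},\end{cases} \] and \[ \int_{-1}^{1}\frac{\cos\bigl(n\sin^{-1}\sqrt t\bigr)\cosh\bigl(m\sinh^{-1}\sqrt t\bigr)}{\cos\bigl(2n\sin^{-1}\sqrt t\bigr)+\cosh\bigl(2m\sinh^{-1}\sqrt t\bigr)}\,t^j\,dt=0,\qquad j=0,1,\ldots,\tfrac{m+n-4}{2}. \]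
   Context: Convention for negative arguments: for $t\ge 0$, $\sqrt t$ is the nonnegative root; for $t<0$, $\sqrt t:=i\sqrt{-t}$, and one sets $\sin^{-1}(iy):=i\sinh^{-1}(y)$ for real $y\ge0$ and $\sinh^{-1}(iy):=i\sin^{-1}(y)$ for $0\le y\le 1$. With this convention the products appearing in the integrands are real-valued (they are values of polynomials in $t$, possibly times $\sqrt{1-t^2}$); in particular $\cos(2n\sin^{-1}\sqrt t)=T_n(1-2t)$ and $\cosh(2m\sinh^{-1}\sqrt t)=T_m(1+2t)$, where $T_k$ is the Chebyshev polynomial of the first kind, $T_k(\cos\theta)=\cos k\theta$. The denominator is positive on $[-1,1]$. *)

theory Defs
  imports "HOL-Analysis.Analysis"
begin

text \<open>Convention of the paper for negative arguments:
  sin^-1(sqrt t) for t < 0 is sin^-1(i sqrt(-t)) = i sinh^-1(sqrt(-t)),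
  sinh^-1(sqrt t) for t < 0 is sinh^-1(i sqrt(-t)) = i sin^-1(sqrt(-t)).\<close>

definition asin_sqrt :: "real \<Rightarrow> complex" where
  "asin_sqrt t = (if 0 \<le> t then complex_of_real (arcsin (sqrt t))
                  else \<i> * complex_of_real (arsinh (sqrt (- t))))"

definition asinh_sqrt :: "real \<Rightarrow> complex" where
  "asinh_sqrt t = (if 0 \<le> t then complex_of_real (arsinh (sqrt t))
                   else \<i> * complex_of_real (arcsin (sqrt (- t))))"

definition den :: "nat \<Rightarrow> nat \<Rightarrow> real \<Rightarrow> complex" where
  "den n m t = cos (2 * of_nat n * asin_sqrt t) + cosh (2 * of_nat m * asinh_sqrt t)"

definition F1 :: "nat \<Rightarrow> nat \<Rightarrow> real \<Rightarrow> complex" where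
  "F1 n m t = sin (of_nat n * asin_sqrt t) * sinh (of_nat m * asinh_sqrt t) / den n m t"

definition F2 :: "nat \<Rightarrow> nat \<Rightarrow> real \<Rightarrow> complex" where
  "F2 n m t = cos (of_nat n * asin_sqrt t) * cosh (of_nat m * asinh_sqrt t) / den n m t"

end

theory Submission
  imports Defs "HOL-Complex_Analysis.Complex_Analysis"
begin

fun av :: "nat \<Rightarrow> 'a::comm_ring_1 \<Rightarrow> 'a" where
  "av 0 t = 1"
| "av (Suc 0) t = 3 - 4 * t"
| "av (Suc (Suc k)) t = 2 * (1 - 2 * t) * av (Suc k) t - av k t"

fun bv :: "nat \<Rightarrow> 'a::comm_ring_1 \<Rightarrow> 'a" where
  "bv 0 t = 1"
| "bv (Suc 0) t = 1 - 4 * t"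
| "bv (Suc (Suc k)) t = 2 * (1 - 2 * t) * bv (Suc k) t - bv k t"

lemma cheb_aux:
  fixes z v :: "'a::field_char_0"
  assumes zv: "z * v = 1"
  defines "q \<equiv> -((z - v)^2) / 4"
  shows "(z^(2*k+1) - v^(2*k+1) = (z - v) * av k q \<and> z^(2*k+1) + v^(2*k+1) = (z + v) * bv k q)
       \<and> (z^(2*Suc k+1) - v^(2*Suc k+1) = (z - v) * av (Suc k) q \<and> z^(2*Suc k+1) + v^(2*Suc k+1) = (z + v) * bv (Suc k) q)"
proof (induction k)
  case 0
  have h4: "4 * q = - ((z - v)^2)" unfolding q_def by simp
  have q1: "3 - 4 * q = z^2 + 1 + v^2" using zv unfolding h4 by (simp add: power2_eq_square algebra_simps)
  have q2: "1 - 4 * q = z^2 - 1 + v^2" using zv unfolding h4 by (simp add: power2_eq_square algebra_simps)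
  have "z^3 - v^3 = (z - v) * (z^2 + 1 + v^2)" using zv by algebra
  moreover have "z^3 + v^3 = (z + v) * (z^2 - 1 + v^2)" using zv by algebra
  ultimately show ?case by (simp add: q1 q2 numeral_3_eq_3)
next
  case (Suc k)
  have h4: "4 * q = - ((z - v)^2)" unfolding q_def by simp
  have "2 * (1 - 2 * q) = 2 - 4 * q" by (simp add: algebra_simps)
  also have "\<dots> = 2 + (z - v)^2" using h4 by simp
  also have "\<dots> = z^2 + v^2" using zv by (simp add: power2_eq_square algebra_simps)
  finally have c: "2 * (1 - 2 * q) = z^2 + v^2" .
  have zv2: "z^2 * v^2 = 1" using zv by (metis power_mult_distrib power_one)
  define A where "A = z^(2*k+1)"
  define B where "B = v^(2*k+1)"
  have ex: "2*Suc (Suc k)+1 = (2*k+1)+2+2" "2*Suc k+1 = (2*k+1)+2" by simp_all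
  have e1: "z^(2*Suc k+1) = A * z^2" "v^(2*Suc k+1) = B * v^2" unfolding A_def B_def by (simp_all only: ex power_add)
  have e2: "z^(2*Suc (Suc k)+1) = A * z^2 * z^2" "v^(2*Suc (Suc k)+1) = B * v^2 * v^2" unfolding A_def B_def by (simp_all only: ex power_add)
  from Suc.IH have IH: "A - B = (z - v) * av k q" "A + B = (z + v) * bv k q"
     "A * z^2 - B * v^2 = (z - v) * av (Suc k) q" "A * z^2 + B * v^2 = (z + v) * bv (Suc k) q"
    unfolding A_def B_def e1[unfolded A_def B_def] by auto
  have "(z - v) * av (Suc (Suc k)) q = (z^2 + v^2) * ((z - v) * av (Suc k) q) - (z - v) * av k q"
    unfolding av.simps c by (simp add: algebra_simps)
  also have "\<dots> = A * z^2 * z^2 - B * v^2 * v^2"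
    unfolding IH[symmetric] using zv2 by (simp add: algebra_simps)
  finally have r1: "(z - v) * av (Suc (Suc k)) q = A * z^2 * z^2 - B * v^2 * v^2" .
  have "(z + v) * bv (Suc (Suc k)) q = (z^2 + v^2) * ((z + v) * bv (Suc k) q) - (z + v) * bv k q"
    unfolding bv.simps c by (simp add: algebra_simps)
  also have "\<dots> = A * z^2 * z^2 + B * v^2 * v^2"
    unfolding IH[symmetric] using zv2 by (simp add: algebra_simps)
  finally have r2: "(z + v) * bv (Suc (Suc k)) q = A * z^2 * z^2 + B * v^2 * v^2" .
  show ?case using Suc.IH r1 r2 e2 by simp
qed

lemma cheb:
  fixes z v :: "'a::field_char_0"
  assumes zv: "z * v = 1"
  shows "z^(2*k+1) - v^(2*k+1) = (z - v) * av k (-((z - v)^2) / 4)"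
    and "z^(2*k+1) + v^(2*k+1) = (z + v) * bv k (-((z - v)^2) / 4)"
  using cheb_aux[OF zv, of k] by auto


lemma av_of_real: "av k (of_real t :: 'a::{real_algebra_1,comm_ring_1}) = of_real (av k t)"
  by (induction k t rule: av.induct) simp_all

lemma bv_of_real: "bv k (of_real t :: 'a::{real_algebra_1,comm_ring_1}) = of_real (bv k t)"
  by (induction k t rule: bv.induct) simp_all

lemma pyth_aux:
  fixes t :: "'a::comm_ring_1"
  shows "(1 - t) * (bv k t)^2 + t * (av k t)^2 = 1
       \<and> (1 - t) * (bv k t * bv (Suc k) t) + t * (av k t * av (Suc k) t) = 1 - 2 * t
       \<and> (1 - t) * (bv (Suc k) t)^2 + t * (av (Suc k) t)^2 = 1"
proof (induction k)
  case 0
  show ?case by (simp add: algebra_simps power2_eq_square)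
next
  case (Suc k)
  define c where "c = 1 - 2 * t"
  define A0 where "A0 = av k t"
  define A1 where "A1 = av (Suc k) t"
  define B0 where "B0 = bv k t"
  define B1 where "B1 = bv (Suc k) t"
  have A2: "av (Suc (Suc k)) t = 2 * c * A1 - A0" unfolding A0_def A1_def c_def by simp
  have B2: "bv (Suc (Suc k)) t = 2 * c * B1 - B0" unfolding B0_def B1_def c_def by simp
  have I0: "(1 - t) * B0^2 + t * A0^2 = 1" and J0: "(1 - t) * (B0 * B1) + t * (A0 * A1) = c"
    and I1: "(1 - t) * B1^2 + t * A1^2 = 1"
    using Suc.IH unfolding A0_def A1_def B0_def B1_def c_def by auto
  have J1: "(1 - t) * (B1 * (2 * c * B1 - B0)) + t * (A1 * (2 * c * A1 - A0))
        = 2 * c * ((1 - t) * B1^2 + t * A1^2) - ((1 - t) * (B0 * B1) + t * (A0 * A1))"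
    by (simp add: algebra_simps power2_eq_square)
  have I2: "(1 - t) * (2 * c * B1 - B0)^2 + t * (2 * c * A1 - A0)^2
        = 4 * c^2 * ((1 - t) * B1^2 + t * A1^2) - 4 * c * ((1 - t) * (B0 * B1) + t * (A0 * A1))
          + ((1 - t) * B0^2 + t * A0^2)"
    by (simp add: algebra_simps power2_eq_square)
  have J1': "(1 - t) * (B1 * (2 * c * B1 - B0)) + t * (A1 * (2 * c * A1 - A0)) = c"
    unfolding J1 I1 J0 by simp
  have I2': "(1 - t) * (2 * c * B1 - B0)^2 + t * (2 * c * A1 - A0)^2 = 1"
    unfolding I2 I1 J0 I0 by (simp add: power2_eq_square)
  show ?case
    unfolding A2 B2 using I1 J1' I2' unfolding A1_def[symmetric] B1_def[symmetric] c_def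
    by simp
qed

lemma pyth: "(1 - t) * (bv k t)^2 + t * (av k t)^2 = (1::'a::comm_ring_1)"
  using pyth_aux by blast

lemma av_neg_ge1_aux:
  fixes t :: real
  assumes "0 \<le> t"
  shows "1 \<le> av k (-t) \<and> av k (-t) \<le> av (Suc k) (-t)"
proof (induction k)
  case 0
  then show ?case using assms by simp
next
  case (Suc k)
  then have h: "1 \<le> av (Suc k) (-t)" "av k (-t) \<le> av (Suc k) (-t)" by auto
  have "0 \<le> 4 * t * av (Suc k) (-t)" using assms h by simp
  then show ?case using h by (simp add: algebra_simps)
qed

lemma av_neg_ge1: "0 \<le> (t::real) \<Longrightarrow> 1 \<le> av k (-t)"
  using av_neg_ge1_aux by blast

definition PP :: "nat \<Rightarrow> nat \<Rightarrow> 'a::comm_ring_1 \<Rightarrow> 'a" where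
  "PP k l t = t * av k t * av l (-t)"
definition AA :: "nat \<Rightarrow> nat \<Rightarrow> 'a::comm_ring_1 \<Rightarrow> 'a" where
  "AA k l t = bv k t * bv l (-t)"
definition DD :: "nat \<Rightarrow> nat \<Rightarrow> 'a::comm_ring_1 \<Rightarrow> 'a" where
  "DD k l t = 2 - 2 * t * (av k t)^2 + 2 * t * (av l (-t))^2"

lemma PAD: "2 * ((PP k l t)^2 + (1 - t^2) * (AA k l t)^2) = (DD k l t :: 'a::comm_ring_1)"
proof -
  have h1: "(1 - t) * (bv k t)^2 + t * (av k t)^2 = 1" by (rule pyth)
  have h2: "(1 + t) * (bv l (-t))^2 - t * (av l (-t))^2 = 1" using pyth[of "-t" l] by simp
  have "(PP k l t)^2 + (1 - t^2) * (AA k l t)^2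
      = t^2 * (av k t)^2 * (av l (-t))^2 + ((1 - t) * (bv k t)^2) * ((1 + t) * (bv l (-t))^2)"
    unfolding PP_def AA_def by (simp add: algebra_simps power2_eq_square)
  also have "\<dots> = t^2 * (av k t)^2 * (av l (-t))^2 + (1 - t * (av k t)^2) * (1 + t * (av l (-t))^2)"
  proof -
    have e1: "(1 - t) * (bv k t)^2 = 1 - t * (av k t)^2" using h1 by (metis add_diff_cancel_right')
    have e2: "(1 + t) * (bv l (-t))^2 = 1 + t * (av l (-t))^2" using h2 by (simp add: diff_eq_eq add.commute)
    show ?thesis unfolding e1 e2 ..
  qed
  also have "\<dots> = 1 - t * (av k t)^2 + t * (av l (-t))^2"
    by (simp add: algebra_simps power2_eq_square)
  finally have eq: "(PP k l t)^2 + (1 - t^2) * (AA k l t)^2 = 1 - t * (av k t)^2 + t * (av l (-t))^2" .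
  show ?thesis unfolding DD_def eq by (simp add: algebra_simps)
qed

lemma DD_pos:
  fixes t :: real
  assumes "-1 \<le> t" "t \<le> 1"
  shows "0 < DD k l t"
proof -
  have h1: "(1 - t) * (bv k t)^2 + t * (av k t)^2 = 1" by (rule pyth)
  have h2: "(1 + t) * (bv l (-t))^2 - t * (av l (-t))^2 = 1" using pyth[of "-t" l] by simp
  consider "t = 0" | "0 < t" | "t < 0" by linarith
  then show ?thesis
  proof cases
    case 1 then show ?thesis by (simp add: DD_def)
  next
    case 2
    have a: "1 \<le> av l (-t)" using av_neg_ge1 2 by simp
    have "DD k l t = 2 * ((1 - t) * (bv k t)^2 + t * (av l (-t))^2)"
      unfolding DD_def using h1 by (simp add: algebra_simps)
    moreover have "0 < (1 - t) * (bv k t)^2 + t * (av l (-t))^2"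
      using assms 2 a by (intro add_nonneg_pos) simp_all
    ultimately show ?thesis by simp
  next
    case 3
    have a: "1 \<le> av k t" using av_neg_ge1[of "-t" k] 3 by simp
    have "DD k l t = 2 * ((1 + t) * (bv l (-t))^2 - t * (av k t)^2)"
      unfolding DD_def using h2 by (simp add: algebra_simps)
    moreover have "0 < (-t) * (av k t)^2" using 3 a by (intro mult_pos_pos) auto
    moreover have "0 < (1 + t) * (bv l (-t))^2 + (-t) * (av k t)^2"
      using assms calculation(2) by (intro add_nonneg_pos) simp_all
    ultimately show ?thesis by simp
  qed
qed


lemma sinh_exp_c: "sinh (X::complex) = (exp X - exp (-X)) / 2"
  by (simp add: sinh_def scaleR_conv_of_real divide_simps)

lemma cosh_exp_c: "cosh (X::complex) = (exp X + exp (-X)) / 2"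
  by (simp add: cosh_def scaleR_conv_of_real divide_simps)

lemma trig_odd:
  fixes X :: complex
  shows "sin (of_nat (2*k+1) * X) = sin X * av k ((sin X)^2)"
    and "cos (of_nat (2*k+1) * X) = cos X * bv k ((sin X)^2)"
    and "sinh (of_nat (2*k+1) * X) = sinh X * av k (-((sinh X)^2))"
    and "cosh (of_nat (2*k+1) * X) = cosh X * bv k (-((sinh X)^2))"
proof -
  define z where "z = exp (\<i> * X)"
  define v where "v = exp (- (\<i> * X))"
  have zv: "z * v = 1" unfolding z_def v_def by (simp add: exp_minus)
  have zn: "exp (\<i> * (of_nat (2*k+1) * X)) = z^(2*k+1)"
    unfolding z_def by (metis exp_of_nat_mult mult.left_commute)
  have vn: "exp (- (\<i> * (of_nat (2*k+1) * X))) = v^(2*k+1)"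
    unfolding v_def by (metis exp_of_nat_mult mult.left_commute mult_minus_right)
  have s: "sin X = (z - v) / (2 * \<i>)" unfolding z_def v_def by (simp add: sin_exp_eq)
  have c: "cos X = (z + v) / 2" unfolding z_def v_def by (simp add: cos_exp_eq)
  have q: "-((z - v)^2) / 4 = (sin X)^2" unfolding s by (simp add: power2_eq_square field_simps)
  show "sin (of_nat (2*k+1) * X) = sin X * av k ((sin X)^2)"
    unfolding sin_exp_eq[of "of_nat (2*k+1) * X"] zn vn cheb(1)[OF zv] q
    unfolding s by simp
  show "cos (of_nat (2*k+1) * X) = cos X * bv k ((sin X)^2)"
    unfolding cos_exp_eq[of "of_nat (2*k+1) * X"] zn vn cheb(2)[OF zv] q
    unfolding c by simp
next
  define z where "z = exp X"
  define v where "v = exp (- X)"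
  have zv: "z * v = 1" unfolding z_def v_def by (simp add: exp_minus)
  have zn: "exp (of_nat (2*k+1) * X) = z^(2*k+1)"
    unfolding z_def by (metis exp_of_nat_mult)
  have vn: "exp (- (of_nat (2*k+1) * X)) = v^(2*k+1)"
    unfolding v_def by (metis exp_of_nat_mult mult_minus_right)
  have s: "sinh X = (z - v) / 2" unfolding z_def v_def by (simp add: sinh_exp_c)
  have c: "cosh X = (z + v) / 2" unfolding z_def v_def by (simp add: cosh_exp_c)
  have q: "-((z - v)^2) / 4 = -((sinh X)^2)" unfolding s by (simp add: power2_eq_square field_simps)
  show "sinh (of_nat (2*k+1) * X) = sinh X * av k (-((sinh X)^2))"
    unfolding sinh_exp_c[of "of_nat (2*k+1) * X"] zn vn cheb(1)[OF zv] q
    unfolding s by simp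
  show "cosh (of_nat (2*k+1) * X) = cosh X * bv k (-((sinh X)^2))"
    unfolding cosh_exp_c[of "of_nat (2*k+1) * X"] zn vn cheb(2)[OF zv] q
    unfolding c by simp
qed


lemma sinh_of_real_c: "sinh (complex_of_real r) = of_real (sinh r)"
  by (simp add: sinh_exp_c sinh_def exp_of_real[symmetric] scaleR_conv_of_real divide_simps)

lemma cosh_of_real_c: "cosh (complex_of_real r) = of_real (cosh r)"
  by (simp add: cosh_exp_c cosh_def exp_of_real[symmetric] scaleR_conv_of_real divide_simps)

lemma sinh_i_times_c: "sinh (\<i> * (w::complex)) = \<i> * sin w"
  by (simp add: sinh_exp_c sin_exp_eq field_simps)

lemma cosh_i_times_c: "cosh (\<i> * (w::complex)) = cos w"
  by (simp add: cosh_exp_c cos_exp_eq field_simps)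

lemma sin_i_times_c: "sin (\<i> * (w::complex)) = \<i> * sinh w"
  by (simp add: sinh_exp_c sin_exp_eq field_simps)

lemma cos_i_times_c: "cos (\<i> * (w::complex)) = cosh w"
  by (simp add: cosh_exp_c cos_exp_eq field_simps)

lemma line_vals:
  fixes t :: real
  assumes "-1 \<le> t" "t \<le> 1"
  shows "(sin (asin_sqrt t))^2 = of_real t \<and> cos (asin_sqrt t) = of_real (sqrt (1 - t))
       \<and> (sinh (asinh_sqrt t))^2 = of_real t \<and> cosh (asinh_sqrt t) = of_real (sqrt (1 + t))
       \<and> sin (asin_sqrt t) * sinh (asinh_sqrt t) = of_real t"
proof (cases "0 \<le> t")
  case True
  have s1: "sqrt t \<le> 1" using assms by simp
  have s0: "-1 \<le> sqrt t" using real_sqrt_ge_zero[OF True] by linarith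
  have r2: "(complex_of_real (sqrt t))^2 = of_real t" using True
    by (metis of_real_power real_sqrt_pow2)
  have X: "asin_sqrt t = of_real (arcsin (sqrt t))" using True unfolding asin_sqrt_def by simp
  have Y: "asinh_sqrt t = of_real (arsinh (sqrt t))" using True unfolding asinh_sqrt_def by simp
  have A: "sin (asin_sqrt t) = of_real (sqrt t)"
    unfolding X sin_of_real sin_arcsin[OF s0 s1] ..
  have B: "cos (asin_sqrt t) = of_real (sqrt (1 - t))"
    unfolding X cos_of_real cos_arcsin[OF s0 s1] using True by simp
  have C: "sinh (asinh_sqrt t) = of_real (sqrt t)"
    unfolding Y sinh_of_real_c sinh_arsinh_real ..
  have D: "cosh (asinh_sqrt t) = of_real (sqrt (1 + t))"
    unfolding Y cosh_of_real_c cosh_arsinh_real using True by (simp add: add.commute)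
  show ?thesis unfolding A B C D r2 power2_eq_square[symmetric] by simp
next
  case False
  have s1: "sqrt (-t) \<le> 1" using assms by simp
  have s0: "-1 \<le> sqrt (-t)" using real_sqrt_ge_zero[of "-t"] False by linarith
  have r2: "(\<i> * complex_of_real (sqrt (-t)))^2 = of_real t" using False
    by (simp add: power_mult_distrib of_real_power[symmetric] del: of_real_power)
  have X: "asin_sqrt t = \<i> * of_real (arsinh (sqrt (-t)))" using False unfolding asin_sqrt_def by simp
  have Y: "asinh_sqrt t = \<i> * of_real (arcsin (sqrt (-t)))" using False unfolding asinh_sqrt_def by simp
  have A: "sin (asin_sqrt t) = \<i> * of_real (sqrt (-t))"
    unfolding X sin_i_times_c sinh_of_real_c sinh_arsinh_real ..
  have B: "cos (asin_sqrt t) = of_real (sqrt (1 - t))"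
    unfolding X cos_i_times_c cosh_of_real_c cosh_arsinh_real using False by (simp add: add.commute)
  have C: "sinh (asinh_sqrt t) = \<i> * of_real (sqrt (-t))"
    unfolding Y sinh_i_times_c sin_of_real sin_arcsin[OF s0 s1] ..
  have D: "cosh (asinh_sqrt t) = of_real (sqrt (1 + t))"
    unfolding Y cosh_i_times_c cos_of_real cos_arcsin[OF s0 s1] using False by simp
  show ?thesis unfolding A B C D r2 power2_eq_square[symmetric] by simp
qed

lemma F_line:
  fixes t :: real
  assumes nk: "n = 2*k+1" and ml: "m = 2*l+1" and t: "-1 \<le> t" "t \<le> 1"
  shows "den n m t = of_real (DD k l t)"
    and "F1 n m t = of_real (PP k l t / DD k l t)"
    and "F2 n m t = of_real (sqrt (1 - t^2) * AA k l t / DD k l t)"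
proof -
  define X where "X = asin_sqrt t"
  define Y where "Y = asinh_sqrt t"
  note lv = line_vals[OF t, folded X_def Y_def]
  have sn: "sin (of_nat n * X) = sin X * of_real (av k t)"
    using trig_odd(1)[of k X] lv nk by (simp add: av_of_real)
  have cn: "cos (of_nat n * X) = of_real (sqrt (1 - t) * bv k t)"
    using trig_odd(2)[of k X] lv nk by (simp add: bv_of_real)
  have shm: "sinh (of_nat m * Y) = sinh Y * of_real (av l (-t))"
    using trig_odd(3)[of l Y] lv ml by (simp add: av_of_real[symmetric])
  have chm: "cosh (of_nat m * Y) = of_real (sqrt (1 + t) * bv l (-t))"
    using trig_odd(4)[of l Y] lv ml by (simp add: bv_of_real[symmetric])
  have num1: "sin (of_nat n * X) * sinh (of_nat m * Y) = of_real (PP k l t)"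
  proof -
    have "sin (of_nat n * X) * sinh (of_nat m * Y) = (sin X * sinh Y) * of_real (av k t) * of_real (av l (-t))"
      unfolding sn shm by (simp add: algebra_simps)
    also have "\<dots> = of_real (PP k l t)" using lv by (simp add: PP_def)
    finally show ?thesis .
  qed
  have sq: "sqrt (1 - t) * sqrt (1 + t) = sqrt (1 - t^2)"
    by (simp add: real_sqrt_mult[symmetric] power2_eq_square algebra_simps)
  have num2: "cos (of_nat n * X) * cosh (of_nat m * Y) = of_real (sqrt (1 - t^2) * AA k l t)"
    unfolding cn chm of_real_mult[symmetric] sq[symmetric] AA_def by (simp add: algebra_simps)
  have s2: "(sin (of_nat n * X))^2 = of_real (t * (av k t)^2)"
    unfolding sn using lv by (simp add: power_mult_distrib)
  have sh2: "(sinh (of_nat m * Y))^2 = of_real (t * (av l (-t))^2)"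
    unfolding shm using lv by (simp add: power_mult_distrib)
  have "den n m t = cos (2 * (of_nat n * X)) + cosh (2 * (of_nat m * Y))"
    unfolding den_def X_def Y_def by (simp add: mult.assoc)
  also have "\<dots> = 1 - 2 * (sin (of_nat n * X))^2 + (1 + 2 * (sinh (of_nat m * Y))^2)"
    unfolding cos_double_sin cosh_double cosh_square_eq by simp
  also have "\<dots> = of_real (DD k l t)"
    unfolding s2 sh2 DD_def by simp
  finally show d: "den n m t = of_real (DD k l t)" .
  show "F1 n m t = of_real (PP k l t / DD k l t)"
    unfolding F1_def d num1[unfolded X_def Y_def] by simp
  show "F2 n m t = of_real (sqrt (1 - t^2) * AA k l t / DD k l t)"
    unfolding F2_def d num2[unfolded X_def Y_def] by simp
qed


fun aw :: "complex \<Rightarrow> nat \<Rightarrow> complex \<Rightarrow> complex" where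
  "aw e 0 w = 1"
| "aw e (Suc 0) w = 3 * w - 2 * e * (w^2 + 1)"
| "aw e (Suc (Suc k)) w = (2 * w - 2 * e * (w^2 + 1)) * aw e (Suc k) w - w^2 * aw e k w"

fun bw :: "complex \<Rightarrow> nat \<Rightarrow> complex \<Rightarrow> complex" where
  "bw e 0 w = 1"
| "bw e (Suc 0) w = w - 2 * e * (w^2 + 1)"
| "bw e (Suc (Suc k)) w = (2 * w - 2 * e * (w^2 + 1)) * bw e (Suc k) w - w^2 * bw e k w"

definition tw :: "complex \<Rightarrow> complex" where "tw w = (w + 1 / w) / 2"
definition sw :: "complex \<Rightarrow> complex" where "sw w = (1 / w - w) / 2"

lemma aw_eq: "w \<noteq> 0 \<Longrightarrow> aw e k w = w^k * av k (e * tw w)"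
proof (induction e k w rule: aw.induct)
  case (1 e w) then show ?case by simp
next
  case (2 e w) then show ?case by (simp add: tw_def field_simps power2_eq_square)
next
  case (3 e k w)
  have "aw e (Suc (Suc k)) w = (2 * w - 2 * e * (w^2 + 1)) * (w^Suc k * av (Suc k) (e * tw w)) - w^2 * (w^k * av k (e * tw w))"
    using 3 by simp
  also have "\<dots> = w^Suc (Suc k) * av (Suc (Suc k)) (e * tw w)"
    using 3(3) by (simp add: tw_def field_simps power2_eq_square)
  finally show ?case .
qed

lemma bw_eq: "w \<noteq> 0 \<Longrightarrow> bw e k w = w^k * bv k (e * tw w)"
proof (induction e k w rule: bw.induct)
  case (1 e w) then show ?case by simp
next
  case (2 e w) then show ?case by (simp add: tw_def field_simps power2_eq_square)
next
  case (3 e k w)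
  have "bw e (Suc (Suc k)) w = (2 * w - 2 * e * (w^2 + 1)) * (w^Suc k * bv (Suc k) (e * tw w)) - w^2 * (w^k * bv k (e * tw w))"
    using 3 by simp
  also have "\<dots> = w^Suc (Suc k) * bv (Suc (Suc k)) (e * tw w)"
    using 3(3) by (simp add: tw_def field_simps power2_eq_square)
  finally show ?case .
qed

lemma aw_0: "aw e k 0 = (-2 * e)^k"
  by (induction e k "0::complex" rule: aw.induct) simp_all

lemma bw_0: "bw e k 0 = (-2 * e)^k"
  by (induction e k "0::complex" rule: bw.induct) simp_all

lemma aw_holo: "aw e k holomorphic_on UNIV"
proof (induction k rule: nat_less_induct)
  case (1 k)
  show ?case
  proof (cases k)
    case 0 then show ?thesis by simp
  next
    case (Suc j)
    show ?thesis
    proof (cases j)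
      case 0 then show ?thesis using Suc by (simp add: holomorphic_intros)
    next
      case (Suc i)
      have "aw e i holomorphic_on UNIV" "aw e (Suc i) holomorphic_on UNIV" using 1 Suc \<open>k = Suc j\<close> by auto
      then show ?thesis using Suc \<open>k = Suc j\<close> by (simp add: holomorphic_intros)
    qed
  qed
qed

lemma bw_holo: "bw e k holomorphic_on UNIV"
proof (induction k rule: nat_less_induct)
  case (1 k)
  show ?case
  proof (cases k)
    case 0 then show ?thesis by simp
  next
    case (Suc j)
    show ?thesis
    proof (cases j)
      case 0 then show ?thesis using Suc by (simp add: holomorphic_intros)
    next
      case (Suc i)
      have "bw e i holomorphic_on UNIV" "bw e (Suc i) holomorphic_on UNIV" using 1 Suc \<open>k = Suc j\<close> by auto
      then show ?thesis using Suc \<open>k = Suc j\<close> by (simp add: holomorphic_intros)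
    qed
  qed
qed

definition Rw :: "nat \<Rightarrow> nat \<Rightarrow> complex \<Rightarrow> complex" where
  "Rw k l w = (w^2 + 1) / 2 * aw 1 k w * aw (-1) l w + (1 - w^2) / 2 * bw 1 k w * bw (-1) l w"

lemma Rw_holo: "Rw k l holomorphic_on UNIV"
proof -
  have "(\<lambda>w. (w^2 + 1) / 2 * aw 1 k w * aw (-1) l w + (1 - w^2) / 2 * bw 1 k w * bw (-1) l w) holomorphic_on UNIV"
    using aw_holo[of 1 k] aw_holo[of "-1" l] bw_holo[of 1 k] bw_holo[of "-1" l]
    by (intro holomorphic_intros) (auto simp: holomorphic_on_def)
  then show ?thesis unfolding Rw_def[abs_def] .
qed

lemma Rw_eq:
  assumes "w \<noteq> 0"
  shows "Rw k l w = w^(k+l+1) * (PP k l (tw w) + sw w * AA k l (tw w))"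
proof -
  have wt: "w * tw w = (w^2 + 1) / 2" and ws: "w * sw w = (1 - w^2) / 2"
    using assms by (simp_all add: tw_def sw_def field_simps power2_eq_square)
  have "w^(k+l+1) * (PP k l (tw w) + sw w * AA k l (tw w))
      = (w * tw w) * (w^k * av k (tw w)) * (w^l * av l (- tw w))
        + (w * sw w) * (w^k * bv k (tw w)) * (w^l * bv l (- tw w))"
    unfolding PP_def AA_def by (simp add: algebra_simps power_add)
  also have "\<dots> = Rw k l w"
    unfolding wt ws Rw_def aw_eq[OF assms] bw_eq[OF assms] by simp
  finally show ?thesis by simp
qed

lemma Rw_0: "Rw k l 0 \<noteq> 0"
  by (simp add: Rw_def aw_0 bw_0)


lemma key:
  fixes t S u c1 c2 :: complex
  assumes u: "u^2 = t" and c1: "c1^2 = 1 - t" and c2: "c2^2 = 1 + t"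
    and z1: "cmod (c1 + \<i> * u) < 1" and z2: "1 < cmod (c2 + u)" and cc: "c1 * c2 = - \<i> * S"
  shows "PP k l t + S * AA k l t \<noteq> 0"
proof
  assume E0: "PP k l t + S * AA k l t = 0"
  define z where "z = c1 + \<i> * u"
  define z' where "z' = c1 - \<i> * u"
  define h where "h = c2 + u"
  define h' where "h' = c2 - u"
  have zz: "z * z' = 1" unfolding z_def z'_def using u c1
    by (simp add: algebra_simps power2_eq_square)
  have hh: "h * h' = 1" unfolding h_def h'_def using u c2
    by (simp add: algebra_simps power2_eq_square)
  have "z - z' = 2 * \<i> * u" unfolding z_def z'_def by simp
  then have q1: "-((z - z')^2) / 4 = t" using u by (simp add: power_mult_distrib)
  have "h - h' = 2 * u" unfolding h_def h'_def by simp
  then have q2: "-((h - h')^2) / 4 = -t" using u by (simp add: power_mult_distrib)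
  define n where "n = 2*k+1"
  define m where "m = 2*l+1"
  have A1: "z^n - z'^n = 2 * \<i> * u * av k t" using cheb(1)[OF zz, of k] unfolding q1 n_def
    by (simp add: z_def z'_def)
  have A2: "z^n + z'^n = 2 * c1 * bv k t" using cheb(2)[OF zz, of k] unfolding q1 n_def
    by (simp add: z_def z'_def)
  have B1: "h^m - h'^m = 2 * u * av l (-t)" using cheb(1)[OF hh, of l] unfolding q2 m_def
    by (simp add: h_def h'_def)
  have B2: "h^m + h'^m = 2 * c2 * bv l (-t)" using cheb(2)[OF hh, of l] unfolding q2 m_def
    by (simp add: h_def h'_def)
  have S: "S = \<i> * (c1 * c2)" using cc by simp
  have "\<i> * (z^n * h'^m + z'^n * h^m) = (\<i>/2) * ((z^n + z'^n) * (h^m + h'^m) - (z^n - z'^n) * (h^m - h'^m))"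
    by (simp add: algebra_simps)
  also have "\<dots> = 2 * (u^2 * av k t * av l (-t) + \<i> * (c1 * c2) * (bv k t * bv l (-t)))"
    unfolding A1 A2 B1 B2 by (simp add: algebra_simps power2_eq_square)
  also have "\<dots> = 2 * (PP k l t + S * AA k l t)"
    unfolding PP_def AA_def S u by (simp add: algebra_simps)
  finally have "\<i> * (z^n * h'^m + z'^n * h^m) = 0" using E0 by simp
  then have "z^n * h'^m + z'^n * h^m = 0" by simp
  then have "z^n * h'^m = - (z'^n * h^m)" by (simp add: eq_neg_iff_add_eq_0)
  then have "cmod (z^n * h'^m) = cmod (z'^n * h^m)" by (simp only: norm_minus_cancel)
  then have nrm: "cmod z ^ n * cmod h' ^ m = cmod z' ^ n * cmod h ^ m"
    by (simp only: norm_mult norm_power)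
  have nz: "cmod z * cmod z' = 1" using zz by (metis norm_mult norm_one)
  have nh: "cmod h * cmod h' = 1" using hh by (metis norm_mult norm_one)
  have zl: "cmod z < 1" using z1 unfolding z_def .
  have hg: "1 < cmod h" using z2 unfolding h_def .
  have zne0: "z \<noteq> 0" using zz by (metis mult_zero_left zero_neq_one)
  have z'g: "1 < cmod z'"
  proof -
    have "cmod z \<noteq> 0" using zne0 by simp
    then have "cmod z' = 1 / cmod z" using nz by (simp add: eq_divide_eq mult.commute)
    moreover have "1 < 1 / cmod z" using zl zne0 by (simp add: less_divide_eq)
    ultimately show ?thesis by simp
  qed
  have h'l: "cmod h' < 1" using nh hg
  proof -
    have "cmod h \<noteq> 0" using hg by linarith
    then have "cmod h' = 1 / cmod h" using nh by (simp add: eq_divide_eq mult.commute)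
    moreover have "1 / cmod h < 1" using hg by (simp add: divide_less_eq)
    ultimately show ?thesis by simp
  qed
  have "cmod z ^ n * cmod h' ^ m < 1"
  proof -
    have zne: "z \<noteq> 0" using zz by (metis mult_zero_left zero_neq_one)
    have "cmod z ^ Suc (2*k) < 1" by (rule power_Suc_less_one) (simp_all add: zl zne)
    then have "cmod z ^ n < 1" unfolding n_def by simp
    moreover have "cmod h' ^ m \<le> 1" using h'l by (simp add: power_le_one)
    ultimately show ?thesis
      using mult_left_le[of "cmod h' ^ m" "cmod z ^ n"] by simp
  qed
  moreover have "1 \<le> cmod z' ^ n * cmod h ^ m"
  proof -
    have a: "1 \<le> cmod z' ^ n" using z'g by (intro one_le_power) simp
    have b: "1 \<le> cmod h ^ m" using hg by (intro one_le_power) simp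
    have "1 * 1 \<le> cmod z' ^ n * cmod h ^ m" by (rule mult_mono) (use a b in auto)
    then show ?thesis by simp
  qed
  ultimately show False using nrm by simp
qed


lemma abs_Re_less_cmod: "Im z \<noteq> 0 \<Longrightarrow> \<bar>Re z\<bar> < cmod z"
proof -
  assume "Im z \<noteq> 0"
  then have "(Re z)^2 < (Re z)^2 + (Im z)^2" by simp
  also have "\<dots> = (cmod z)^2" by (simp add: cmod_power2)
  finally show ?thesis by (metis abs_ge_zero norm_ge_zero power2_abs power_less_imp_less_base)
qed

lemma csqrt_upper: "0 < Im z \<Longrightarrow> 0 < Re (csqrt z) \<and> 0 < Im (csqrt z)"
proof -
  assume a: "0 < Im z"
  have "\<bar>Re z\<bar> < cmod z" using a by (intro abs_Re_less_cmod) simp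
  then have "0 < cmod z + Re z" "0 < cmod z - Re z" by linarith+
  then show ?thesis using a by simp
qed

lemma csqrt_lower: "Im z < 0 \<Longrightarrow> 0 < Re (csqrt z) \<and> Im (csqrt z) < 0"
proof -
  assume a: "Im z < 0"
  have "\<bar>Re z\<bar> < cmod z" using a by (intro abs_Re_less_cmod) simp
  then have "0 < cmod z + Re z" "0 < cmod z - Re z" by linarith+
  then show ?thesis using a by simp
qed

lemma norm_pair_lt:
  fixes a b :: complex and c :: real
  assumes "a * b = of_real c" "0 < c" "(cmod b)^2 < (cmod a)^2"
  shows "(cmod b)^2 < c \<and> c < (cmod a)^2"
proof -
  have ab: "cmod a * cmod b = c" using assms(1,2) by (metis norm_mult norm_of_real abs_of_pos)
  have lt: "cmod b < cmod a" using assms(3) by (meson norm_ge_zero power_less_imp_less_base)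
  have bp: "0 < cmod b" using ab assms(2) by (metis mult_zero_right norm_ge_zero less_le)
  have ap: "0 < cmod a" using lt by (meson norm_ge_zero le_less_trans)
  have "cmod b * cmod b < cmod a * cmod b" using lt bp by (rule mult_strict_right_mono)
  moreover have "cmod a * cmod b < cmod a * cmod a" using lt ap by (rule mult_strict_left_mono)
  ultimately show ?thesis using ab by (simp add: power2_eq_square)
qed


lemma sw_sq: "w \<noteq> 0 \<Longrightarrow> (sw w)^2 = (tw w)^2 - 1"
  by (simp add: sw_def tw_def field_simps power2_eq_square)

lemma tw_sw: "w \<noteq> 0 \<Longrightarrow> tw w - sw w = w"
  by (simp add: sw_def tw_def field_simps)

lemma Im_tw_pos:
  assumes "cmod w < 1" "Im w < 0"
  shows "0 < Im (tw w)"
proof -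
  have w0: "w \<noteq> 0" using assms by auto
  have n2: "(cmod w)^2 < 1" using assms(1) by (simp add: power_less_one_iff abs_square_less_1)
  have np: "0 < (cmod w)^2" using w0 by simp
  have "Im (1 / w) = - Im w / (cmod w)^2"
    by (simp add: Im_divide cmod_power2)
  then have "Im (tw w) = Im w * (1 - 1 / (cmod w)^2) / 2"
    by (simp add: tw_def field_simps)
  moreover have "1 - 1 / (cmod w)^2 < 0" using n2 np by (simp add: field_simps)
  moreover have "0 < Im w * (1 - 1 / (cmod w)^2)" using assms(2) calculation(2) by (rule mult_neg_neg)
  ultimately show ?thesis by simp
qed

lemma wit_lower:
  assumes w1: "cmod w < 1" and wI: "Im w < 0"
  shows "\<exists>u c1 c2. u^2 = tw w \<and> c1^2 = 1 - tw w \<and> c2^2 = 1 + tw w \<and> cmod (c1 + \<i> * u) < 1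
          \<and> 1 < cmod (c2 + u) \<and> c1 * c2 = - \<i> * sw w"
proof -
  have w0: "w \<noteq> 0" using wI by auto
  define t where "t = tw w"
  define S where "S = sw w"
  have tI: "0 < Im t" unfolding t_def using Im_tw_pos[OF w1 wI] .
  define u where "u = csqrt t"
  define c1 where "c1 = csqrt (1 - t)"
  define c2 where "c2 = csqrt (1 + t)"
  have u2: "u^2 = t" and c12: "c1^2 = 1 - t" and c22: "c2^2 = 1 + t" unfolding u_def c1_def c2_def by simp_all
  have uq: "0 < Re u" "0 < Im u" unfolding u_def using csqrt_upper[OF tI] by auto
  have c1q: "0 < Re c1" "Im c1 < 0" unfolding c1_def using csqrt_lower[of "1 - t"] tI by auto
  have c2q: "0 < Re c2" "0 < Im c2" unfolding c2_def using csqrt_upper[of "1 + t"] tI by auto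
  have z1: "cmod (c1 + \<i> * u) < 1"
  proof -
    have prod: "(c1 - \<i> * u) * (c1 + \<i> * u) = of_real 1"
      using u2 c12 by (simp add: algebra_simps power2_eq_square)
    have "(cmod (c1 - \<i> * u))^2 - (cmod (c1 + \<i> * u))^2 = 4 * (Re c1 * Im u - Im c1 * Re u)"
      unfolding cmod_power2 by (simp add: algebra_simps power2_eq_square)
    moreover have "0 < Re c1 * Im u" "0 < - Im c1 * Re u" using uq c1q by (simp_all add: mult_neg_pos mult_pos_neg)
    ultimately have "(cmod (c1 + \<i> * u))^2 < (cmod (c1 - \<i> * u))^2" by simp
    then have "(cmod (c1 + \<i> * u))^2 < 1" using norm_pair_lt[OF prod] by simp
    then show ?thesis by (simp add: power_less_one_iff abs_square_less_1)
  qed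
  have z2: "1 < cmod (c2 + u)"
  proof -
    have prod: "(c2 + u) * (c2 - u) = of_real 1"
      using u2 c22 by (simp add: algebra_simps power2_eq_square)
    have "(cmod (c2 + u))^2 - (cmod (c2 - u))^2 = 4 * (Re c2 * Re u + Im c2 * Im u)"
      unfolding cmod_power2 by (simp add: algebra_simps power2_eq_square)
    moreover have "0 < Re c2 * Re u" "0 < Im c2 * Im u" using uq c2q by simp_all
    ultimately have "(cmod (c2 - u))^2 < (cmod (c2 + u))^2" by simp
    then have "1 < (cmod (c2 + u))^2" using norm_pair_lt[OF prod] by simp
    then show ?thesis
    proof (rule contrapos_pp)
      assume "\<not> 1 < cmod (c2 + u)"
      then have "(cmod (c2 + u))^2 \<le> 1" by (intro power_le_one) auto
      then show "\<not> 1 < (cmod (c2 + u))^2" by simp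
    qed
  qed
  have "(c1 * c2)^2 = (1 - t) * (1 + t)" by (simp add: power_mult_distrib c12 c22)
  also have "\<dots> = - (t^2 - 1)" by (simp add: algebra_simps power2_eq_square)
  also have "\<dots> = (- \<i> * S)^2" using sw_sq[OF w0] unfolding S_def t_def
    by (simp add: power_mult_distrib)
  finally have sq: "(c1 * c2)^2 = (- \<i> * S)^2" .
  have cc: "c1 * c2 = - \<i> * S"
  proof (rule ccontr)
    assume ne: "c1 * c2 \<noteq> - \<i> * S"
    then have "c1 * c2 = \<i> * S" using sq by (simp add: power2_eq_iff)
    then have Sv: "S = - \<i> * (c1 * c2)" by (simp add: field_simps)
    have "w = t - S" unfolding t_def S_def using tw_sw[OF w0] by simp
    also have "\<dots> = (c2 + \<i> * c1)^2 / 2"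
      unfolding Sv using c12 c22 by (simp add: algebra_simps power2_eq_square)
    finally have wv: "w = (c2 + \<i> * c1)^2 / 2" .
    have prod: "(c2 + \<i> * c1) * (c2 - \<i> * c1) = of_real 2"
      using c12 c22 by (simp add: algebra_simps power2_eq_square)
    have "(cmod (c2 + \<i> * c1))^2 - (cmod (c2 - \<i> * c1))^2 = 4 * (Im c2 * Re c1 - Re c2 * Im c1)"
      unfolding cmod_power2 by (simp add: algebra_simps power2_eq_square)
    moreover have "0 < Im c2 * Re c1" "0 < - Re c2 * Im c1" using c1q c2q by (simp_all add: mult_neg_pos mult_pos_neg)
    ultimately have "(cmod (c2 - \<i> * c1))^2 < (cmod (c2 + \<i> * c1))^2" by simp
    then have "2 < (cmod (c2 + \<i> * c1))^2" using norm_pair_lt[OF prod] by simp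
    then have "1 < cmod w" unfolding wv by (simp add: norm_divide norm_power)
    then show False using w1 by simp
  qed
  show ?thesis using u2 c12 c22 z1 z2 cc unfolding t_def S_def by blast
qed


definition WIT :: "complex \<Rightarrow> bool" where
  "WIT w \<longleftrightarrow> (\<exists>u c1 c2. u^2 = tw w \<and> c1^2 = 1 - tw w \<and> c2^2 = 1 + tw w \<and> cmod (c1 + \<i> * u) < 1
          \<and> 1 < cmod (c2 + u) \<and> c1 * c2 = - \<i> * sw w)"

lemma tw_cnj: "tw (cnj w) = cnj (tw w)" by (simp add: tw_def)
lemma sw_cnj: "sw (cnj w) = cnj (sw w)" by (simp add: sw_def)
lemma tw_neg: "tw (- w) = - tw w" by (cases "w = 0") (simp_all add: tw_def field_simps)
lemma sw_neg: "sw (- w) = - sw w" by (cases "w = 0") (simp_all add: sw_def field_simps)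

lemma WIT_cnj: "WIT (cnj w) \<Longrightarrow> WIT w"
proof -
  assume "WIT (cnj w)"
  then obtain u c1 c2 where h: "u^2 = tw (cnj w)" "c1^2 = 1 - tw (cnj w)" "c2^2 = 1 + tw (cnj w)"
    "cmod (c1 + \<i> * u) < 1" "1 < cmod (c2 + u)" "c1 * c2 = - \<i> * sw (cnj w)"
    unfolding WIT_def by blast
  have a: "(- cnj u)^2 = tw w" using arg_cong[OF h(1), of cnj] by (simp add: tw_cnj)
  have b: "(cnj c1)^2 = 1 - tw w" using arg_cong[OF h(2), of cnj] by (simp add: tw_cnj)
  have c: "(- cnj c2)^2 = 1 + tw w" using arg_cong[OF h(3), of cnj] by (simp add: tw_cnj)
  have d: "cnj c1 + \<i> * (- cnj u) = cnj (c1 + \<i> * u)" by simp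
  have e: "- cnj c2 + - cnj u = - cnj (c2 + u)" by simp
  have f: "cnj c1 * (- cnj c2) = - \<i> * sw w" using arg_cong[OF h(6), of cnj] by (simp add: sw_cnj)
  show "WIT w" unfolding WIT_def
    apply (rule exI[of _ "- cnj u"], rule exI[of _ "cnj c1"], rule exI[of _ "- cnj c2"])
    using a b c f h(4,5) unfolding d e by (simp only: complex_mod_cnj norm_minus_cancel)
qed

lemma WIT_neg: "WIT (- w) \<Longrightarrow> WIT w"
proof -
  assume "WIT (- w)"
  then obtain u c1 c2 where h: "u^2 = tw (- w)" "c1^2 = 1 - tw (- w)" "c2^2 = 1 + tw (- w)"
    "cmod (c1 + \<i> * u) < 1" "1 < cmod (c2 + u)" "c1 * c2 = - \<i> * sw (- w)"
    unfolding WIT_def by blast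
  have a: "(\<i> * u)^2 = tw w" using h(1) by (simp add: tw_neg power_mult_distrib)
  have b: "c2^2 = 1 - tw w" using h(3) by (simp add: tw_neg)
  have c: "(- c1)^2 = 1 + tw w" using h(2) by (simp add: tw_neg)
  have f: "c2 * (- c1) = - \<i> * sw w" using h(6) by (simp add: sw_neg algebra_simps)
  have d: "cmod (c2 + \<i> * (\<i> * u)) < 1"
  proof -
    have prod: "(c2 + u) * (c2 - u) = of_real 1" using h(1,3) by (simp add: algebra_simps power2_eq_square tw_neg)
    have "cmod (c2 + u) * cmod (c2 - u) = 1" using prod by (metis norm_mult norm_one of_real_1)
    moreover have "cmod (c2 + u) \<noteq> 0" using h(5) by linarith
    ultimately have "cmod (c2 - u) = 1 / cmod (c2 + u)" by (simp add: eq_divide_eq mult.commute)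
    moreover have "1 / cmod (c2 + u) < 1" using h(5) by (simp add: divide_less_eq)
    ultimately show ?thesis by simp
  qed
  have e: "1 < cmod (- c1 + \<i> * u)"
  proof -
    have prod: "(c1 + \<i> * u) * (c1 - \<i> * u) = of_real 1" using h(1,2) by (simp add: algebra_simps power2_eq_square tw_neg)
    have nz: "c1 + \<i> * u \<noteq> 0" using prod by auto
    have "cmod (c1 + \<i> * u) * cmod (c1 - \<i> * u) = 1" using prod by (metis norm_mult norm_one of_real_1)
    then have "cmod (c1 - \<i> * u) = 1 / cmod (c1 + \<i> * u)" using nz by (simp add: eq_divide_eq mult.commute)
    moreover have "1 < 1 / cmod (c1 + \<i> * u)" using h(4) nz by (simp add: less_divide_eq)
    moreover have "cmod (- c1 + \<i> * u) = cmod (c1 - \<i> * u)" by (metis minus_diff_eq norm_minus_cancel uminus_add_conv_diff)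
    ultimately show ?thesis by simp
  qed
  show "WIT w" unfolding WIT_def using a b c d e f by blast
qed

lemma sqrt_lemma: "1 < (x::real) \<Longrightarrow> sqrt x < 1 + sqrt (x - 1)"
proof -
  assume x: "1 < x"
  have s: "0 < sqrt (x - 1)" using x by simp
  have "x < (1 + sqrt (x - 1))^2"
    using s x by (simp add: power2_eq_square algebra_simps)
  then have "sqrt x < sqrt ((1 + sqrt (x - 1))^2)" by (simp only: real_sqrt_less_iff)
  also have "\<dots> = 1 + sqrt (x - 1)" using s by simp
  finally show ?thesis .
qed

lemma WIT_pos_real:
  assumes "0 < r" "r < 1"
  shows "WIT (complex_of_real r)"
proof -
  define T where "T = (r + 1 / r) / 2"
  define Sr where "Sr = (1 / r - r) / 2"
  have tw: "tw (of_real r) = of_real T" unfolding T_def tw_def by simp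
  have sw: "sw (of_real r) = of_real Sr" unfolding Sr_def sw_def by simp
  have T1: "1 < T"
  proof -
    have "0 < (1 - r)^2 / r" using assms by simp
    also have "(1 - r)^2 / r = r + 1 / r - 2" using assms by (simp add: field_simps power2_eq_square)
    finally show ?thesis unfolding T_def by simp
  qed
  have rr: "r * r < 1 * 1" using assms by (intro mult_strict_mono) auto
  have Sp: "0 < Sr" unfolding Sr_def using assms rr by (simp add: field_simps)
  have Ssq: "Sr^2 = T^2 - 1" unfolding Sr_def T_def using assms by (simp add: field_simps power2_eq_square)
  have Sv: "Sr = sqrt (T - 1) * sqrt (1 + T)"
  proof -
    have "Sr = sqrt (Sr^2)" using Sp by simp
    also have "Sr^2 = (T - 1) * (1 + T)" unfolding Ssq by (simp add: algebra_simps power2_eq_square)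
    finally show ?thesis by (simp add: real_sqrt_mult)
  qed
  define u where "u = complex_of_real (sqrt T)"
  define c1 where "c1 = - \<i> * complex_of_real (sqrt (T - 1))"
  define c2 where "c2 = complex_of_real (sqrt (1 + T))"
  have "u^2 = of_real T" unfolding u_def using T1 by (simp add: of_real_power[symmetric] del: of_real_power)
  moreover have "c1^2 = 1 - of_real T" unfolding c1_def using T1
    by (simp add: power_mult_distrib of_real_power[symmetric] del: of_real_power)
  moreover have "c2^2 = 1 + of_real T" unfolding c2_def using T1
    by (simp add: of_real_power[symmetric] del: of_real_power)
  moreover have "cmod (c1 + \<i> * u) < 1"
  proof -
    have "c1 + \<i> * u = \<i> * of_real (sqrt T - sqrt (T - 1))" unfolding c1_def u_def by (simp add: algebra_simps)
    moreover have "0 \<le> sqrt T - sqrt (T - 1)" by simp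
    ultimately have "cmod (c1 + \<i> * u) = sqrt T - sqrt (T - 1)"
      by (simp add: norm_mult of_real_diff[symmetric] del: of_real_diff)
    then show ?thesis using sqrt_lemma[OF T1] by simp
  qed
  moreover have "1 < cmod (c2 + u)"
  proof -
    have "c2 + u = of_real (sqrt (1 + T) + sqrt T)" unfolding c2_def u_def by simp
    moreover have a: "1 < sqrt (1 + T)" using T1 by simp
    moreover have b: "0 \<le> sqrt T" using T1 by simp
    moreover have "1 < sqrt (1 + T) + sqrt T" using a b by linarith
    ultimately show ?thesis by (simp only: norm_of_real)
  qed
  moreover have "c1 * c2 = - \<i> * of_real Sr" unfolding c1_def c2_def Sv by simp
  ultimately show ?thesis unfolding WIT_def tw sw by blast
qed

lemma WIT_all:
  assumes "cmod w < 1" "w \<noteq> 0"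
  shows "WIT w"
proof -
  consider "Im w < 0" | "0 < Im w" | "Im w = 0" "0 < Re w" | "Im w = 0" "Re w < 0"
    using assms(2) complex_eq_iff by fastforce
  then show ?thesis
  proof cases
    case 1 then show ?thesis using wit_lower[OF assms(1)] unfolding WIT_def by blast
  next
    case 2
    have "WIT (cnj w)" using wit_lower[of "cnj w"] assms 2 unfolding WIT_def by simp
    then show ?thesis by (rule WIT_cnj)
  next
    case 3
    have "w = of_real (Re w)" using 3 complex_eq_iff by auto
    moreover have "Re w < 1" using assms(1) abs_Re_le_cmod[of w] by linarith
    ultimately show ?thesis using WIT_pos_real[of "Re w"] 3 by metis
  next
    case 4
    have "- w = of_real (- Re w)" using 4 complex_eq_iff by auto
    moreover have "- Re w < 1" using assms(1) abs_Re_le_cmod[of w] by linarith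
    ultimately have "WIT (- w)" using WIT_pos_real[of "- Re w"] 4 by (metis neg_0_less_iff_less)
    then show ?thesis by (rule WIT_neg)
  qed
qed

lemma Rw_nonzero_inside:
  assumes "cmod w < 1"
  shows "Rw k l w \<noteq> 0"
proof (cases "w = 0")
  case True then show ?thesis using Rw_0 by simp
next
  case False
  obtain u c1 c2 where h: "u^2 = tw w" "c1^2 = 1 - tw w" "c2^2 = 1 + tw w" "cmod (c1 + \<i> * u) < 1"
          "1 < cmod (c2 + u)" "c1 * c2 = - \<i> * sw w"
    using WIT_all[OF assms False] unfolding WIT_def by blast
  have "PP k l (tw w) + sw w * AA k l (tw w) \<noteq> 0" by (rule key[OF h])
  then show ?thesis unfolding Rw_eq[OF False] using False by simp
qed


lemma sub_lemma:
  fixes G :: "real \<Rightarrow> real"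
  assumes contG: "continuous_on {-1..1} G"
  shows "((\<lambda>t. G t / sqrt (1 - t^2)) has_integral (pi * integral {0..1} (\<lambda>x. G (cos (2 * pi * x))))) {-1..1}"
proof -
  define h where "h x = G (cos (2 * pi * x))" for x
  define K where "K y = integral {0..y} h" for y
  have conth: "continuous_on {0..1} h"
    unfolding h_def
    by (rule continuous_on_compose2[OF contG]) (auto intro!: continuous_intros)
  have Kd: "(K has_real_derivative h y) (at y)" if "0 < y" "y < 1" for y
  proof -
    have d: "(K has_real_derivative h y) (at y within {0..1})"
      unfolding K_def[abs_def] using conth that by (intro integral_has_real_derivative) auto
    have i: "y \<in> interior {0..1::real}" using that by simp
    show ?thesis using d unfolding at_within_interior[OF i] .
  qed
  have Kc: "continuous_on {0..1} K"
    unfolding K_def[abs_def] using conth by (intro indefinite_integral_continuous_1 integrable_continuous_real)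
  define a where "a t = arccos t / (2 * pi)" for t
  define \<Phi> where "\<Phi> t = 2 * pi * K (1 - a t) - 2 * pi * K (a t)" for t
  have a_range: "0 \<le> a t \<and> a t \<le> 1/2" if "-1 \<le> t" "t \<le> 1" for t
    using arccos_lbound[of t] arccos_ubound[of t] that unfolding a_def by (auto simp: field_simps)
  have a_range2: "0 < a t \<and> a t < 1/2" if "-1 < t" "t < 1" for t
    using arccos_lt_bounded[of t] that unfolding a_def by (auto simp: field_simps)
  have a01: "a t \<in> {0..1}" "1 - a t \<in> {0..1}" if "-1 \<le> t" "t \<le> 1" for t
    using a_range[OF that] by auto
  have ca: "continuous_on {-1..1} a" unfolding a_def[abs_def] by (intro continuous_intros) auto
  have "continuous_on {-1..1} \<Phi>"
  proof -
    have c1: "continuous_on {-1..1} (\<lambda>t. K (a t))"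
      by (rule continuous_on_compose2[OF Kc ca]) (use a01 in auto)
    have c2: "continuous_on {-1..1} (\<lambda>t. K (1 - a t))"
      by (rule continuous_on_compose2[OF Kc]) (use a01 in \<open>auto intro!: continuous_intros ca\<close>)
    show ?thesis unfolding \<Phi>_def[abs_def] by (intro continuous_intros c1 c2)
  qed
  moreover have "(\<Phi> has_vector_derivative (2 * (G t / sqrt (1 - t^2)))) (at t)" if t: "t \<in> {-1<..<1}" for t
  proof -
    have tt: "-1 < t" "t < 1" using t by auto
    have ad: "(a has_real_derivative (inverse (- sqrt (1 - t^2)) / (2 * pi))) (at t)"
      unfolding a_def[abs_def] using DERIV_arccos[OF tt] tt by (intro derivative_eq_intros) auto
    have ar: "0 < a t" "a t < 1/2" using a_range2[OF tt] by auto
    have h1: "h (a t) = G t" unfolding h_def a_def using tt by (simp add: cos_arccos)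
    have h2: "h (1 - a t) = G t"
    proof -
      have "cos (2 * pi * (1 - a t)) = cos (2 * pi - arccos t)" unfolding a_def by (simp add: algebra_simps)
      also have "\<dots> = t" using tt by (simp add: cos_arccos)
      finally show ?thesis unfolding h_def by simp
    qed
    have d1: "((\<lambda>t. K (a t)) has_real_derivative h (a t) * (inverse (- sqrt (1 - t^2)) / (2 * pi))) (at t)"
    proof -
      have k: "(K has_real_derivative h (a t)) (at (a t))" by (rule Kd) (use ar in auto)
      show ?thesis using DERIV_chain2[where g=a, OF k ad] by simp
    qed
    have d2: "((\<lambda>t. K (1 - a t)) has_real_derivative h (1 - a t) * (- (inverse (- sqrt (1 - t^2)) / (2 * pi)))) (at t)"
    proof -
      have gd: "((\<lambda>t. 1 - a t) has_real_derivative (- (inverse (- sqrt (1 - t^2)) / (2 * pi)))) (at t)"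
        using ad by (intro derivative_eq_intros) auto
      have k: "(K has_real_derivative h (1 - a t)) (at (1 - a t))" by (rule Kd) (use ar in auto)
      show ?thesis using DERIV_chain2[where g="\<lambda>t. 1 - a t", OF k gd] by simp
    qed
    have "(\<Phi> has_real_derivative (2 * pi * (h (1 - a t) * (- (inverse (- sqrt (1 - t^2)) / (2 * pi))))
            - 2 * pi * (h (a t) * (inverse (- sqrt (1 - t^2)) / (2 * pi))))) (at t)"
      unfolding \<Phi>_def[abs_def] by (intro DERIV_diff DERIV_cmult d1 d2)
    moreover have "2 * pi * (h (1 - a t) * (- (inverse (- sqrt (1 - t^2)) / (2 * pi))))
            - 2 * pi * (h (a t) * (inverse (- sqrt (1 - t^2)) / (2 * pi))) = 2 * (G t / sqrt (1 - t^2))"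
      unfolding h1 h2 by (simp add: field_simps)
    ultimately show ?thesis by (simp add: has_real_derivative_iff_has_vector_derivative)
  qed
  ultimately have "((\<lambda>t. 2 * (G t / sqrt (1 - t^2))) has_integral (\<Phi> 1 - \<Phi> (-1))) {-1..1}"
    by (intro fundamental_theorem_of_calculus_interior) auto
  moreover have "\<Phi> 1 - \<Phi> (-1) = 2 * (pi * K 1)" unfolding \<Phi>_def a_def by (simp add: K_def)
  ultimately have "((\<lambda>t. 2 * (G t / sqrt (1 - t^2))) has_integral 2 * (pi * K 1)) {-1..1}" by simp
  then have "((\<lambda>t. (1/2) * (2 * (G t / sqrt (1 - t^2)))) has_integral (1/2) * (2 * (pi * K 1))) {-1..1}"
    by (rule has_integral_mult_right)
  then have "((\<lambda>t. G t / sqrt (1 - t^2)) has_integral (pi * K 1)) {-1..1}" by simp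
  then show ?thesis unfolding K_def h_def .
qed


lemma PP_of_real: "PP k l (complex_of_real c) = of_real (PP k l c)"
  unfolding PP_def by (simp add: av_of_real[symmetric])
lemma AA_of_real: "AA k l (complex_of_real c) = of_real (AA k l c)"
  unfolding AA_def by (simp add: bv_of_real[symmetric])

lemma inv_cis: "1 / cis th = cis (- th)"
  by (simp add: divide_inverse)

lemma tw_cis: "tw (cis th) = of_real (cos th)"
  unfolding tw_def inv_cis by (simp add: complex_eq_iff)

lemma sw_cis: "sw (cis th) = - \<i> * of_real (sin th)"
  unfolding sw_def inv_cis by (simp add: complex_eq_iff)

lemma inv_form:
  fixes P Q :: real
  assumes "P^2 + Q^2 \<noteq> 0"
  shows "inverse (complex_of_real P - \<i> * of_real Q) = Complex (P / (P^2 + Q^2)) (Q / (P^2 + Q^2))"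
proof -
  define d where "d = P^2 + Q^2"
  have r: "P * (P / d) + Q * (Q / d) = 1"
  proof -
    have "P * (P / d) + Q * (Q / d) = (P^2 + Q^2) / d" by (simp add: power2_eq_square add_divide_distrib)
    then show ?thesis using assms unfolding d_def by simp
  qed
  have i: "P * (Q / d) - Q * (P / d) = 0" by simp
  have "(complex_of_real P - \<i> * of_real Q) * Complex (P / d) (Q / d) = 1"
    using r i by (simp add: complex_eq_iff)
  then have "(complex_of_real P - \<i> * of_real Q) * Complex (P / (P^2 + Q^2)) (Q / (P^2 + Q^2)) = 1"
    unfolding d_def .
  then show ?thesis by (rule inverse_unique)
qed

lemma E_cis:
  fixes th :: real
  defines "c \<equiv> cos th"
  shows "PP k l (tw (cis th)) + sw (cis th) * AA k l (tw (cis th)) = of_real (PP k l c) - \<i> * of_real (sin th * AA k l c)"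
    and "inverse (PP k l (tw (cis th)) + sw (cis th) * AA k l (tw (cis th)))
           = Complex (2 * PP k l c / DD k l c) (2 * (sin th * AA k l c) / DD k l c)"
    and "PP k l (tw (cis th)) + sw (cis th) * AA k l (tw (cis th)) \<noteq> 0"
proof -
  show e: "PP k l (tw (cis th)) + sw (cis th) * AA k l (tw (cis th)) = of_real (PP k l c) - \<i> * of_real (sin th * AA k l c)"
    unfolding tw_cis sw_cis PP_of_real AA_of_real c_def by simp
  have pq: "(PP k l c)^2 + (sin th * AA k l c)^2 = DD k l c / 2"
    using PAD[of k l c] unfolding c_def by (simp add: power_mult_distrib sin_squared_eq algebra_simps)
  have dpos: "0 < DD k l c" unfolding c_def by (rule DD_pos) simp_all
  show "inverse (PP k l (tw (cis th)) + sw (cis th) * AA k l (tw (cis th)))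
           = Complex (2 * PP k l c / DD k l c) (2 * (sin th * AA k l c) / DD k l c)"
    unfolding e using dpos by (subst inv_form) (simp_all add: pq)
  show "PP k l (tw (cis th)) + sw (cis th) * AA k l (tw (cis th)) \<noteq> 0"
  proof
    assume "PP k l (tw (cis th)) + sw (cis th) * AA k l (tw (cis th)) = 0"
    then have p1: "PP k l c = 0" and p2: "sin th * AA k l c = 0" unfolding e by (simp_all add: complex_eq_iff)
    have "DD k l c / 2 = 0" unfolding pq[symmetric] p1 p2 by simp
    then show False using dpos by simp
  qed
qed

lemma Rw_nonzero_cball:
  assumes "cmod w \<le> 1"
  shows "Rw k l w \<noteq> 0"
proof (cases "cmod w < 1")
  case True then show ?thesis by (rule Rw_nonzero_inside)
next
  case False
  then have w1: "cmod w = 1" using assms by simp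
  define th where "th = Arg w"
  have wc: "w = cis th" unfolding th_def using rcis_cmod_Arg[of w] w1 by (simp add: rcis_def)
  have w0: "w \<noteq> 0" using w1 by auto
  have "PP k l (tw w) + sw w * AA k l (tw w) \<noteq> 0" using E_cis(3)[of k l th] unfolding wc[symmetric] .
  then show ?thesis unfolding Rw_eq[OF w0] using w0 by simp
qed

lemma open_U: "open {w. Rw k l w \<noteq> 0}"
  using Rw_holo[of k l] by (intro open_Collect_neq) (auto intro: holomorphic_on_imp_continuous_on)

lemma mean_value:
  assumes "f holomorphic_on U" "open U" "cball 0 1 \<subseteq> U"
  shows "((\<lambda>x. f (exp (2 * of_real pi * \<i> * of_real x))) has_integral f 0) {0..1}"
proof -
  have hc: "f holomorphic_on cball 0 1" using assms holomorphic_on_subset by blast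
  have "((\<lambda>u. f u / (u - 0)) has_contour_integral 2 * of_real pi * \<i> * f 0) (circlepath 0 1)"
    by (rule Cauchy_integral_circlepath_simple[OF hc]) simp
  then have A: "((\<lambda>x. f (circlepath 0 1 x) / (circlepath 0 1 x - 0) * vector_derivative (circlepath 0 1) (at x within {0..1}))
           has_integral 2 * of_real pi * \<i> * f 0) {0..1}"
    unfolding has_contour_integral_def .
  have B: "(2 * of_real pi * \<i>) * f (exp (2 * of_real pi * \<i> * of_real x))
      = f (circlepath 0 1 x) / (circlepath 0 1 x - 0) * vector_derivative (circlepath 0 1) (at x within {0..1})" if "x \<in> {0..1}" for x
  proof -
    have vd: "vector_derivative (circlepath 0 1) (at x within {0..1}) = complex_of_real (2 * pi) * \<i> * complex_of_real 1 *
       exp (2 * complex_of_real pi * \<i> * complex_of_real x)"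
      using that by (intro vector_derivative_circlepath01) auto
    show ?thesis unfolding vd by (simp add: circlepath)
  qed
  have "((\<lambda>x. (2 * of_real pi * \<i>) * f (exp (2 * of_real pi * \<i> * of_real x)))
           has_integral (2 * of_real pi * \<i>) * f 0) {0..1}"
    by (rule has_integral_spike_finite[OF finite.emptyI _ A]) (use B in auto)
  moreover have ne: "2 * of_real pi * \<i> \<noteq> 0" by simp
  ultimately have "((\<lambda>x. f (exp (2 * of_real pi * \<i> * of_real x))) has_integral ((2 * of_real pi * \<i>) * f 0) / (2 * of_real pi * \<i>)) {0..1}"
    using has_integral_mult_right_iff by blast
  then show ?thesis using ne by simp
qed


lemma av_cont: "continuous_on UNIV (\<lambda>t::real. av k t)"
proof (induction k rule: nat_less_induct)
  case (1 k)
  show ?case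
  proof (cases k)
    case 0 then show ?thesis by simp
  next
    case (Suc j)
    show ?thesis
    proof (cases j)
      case 0 then show ?thesis using Suc by (simp add: continuous_intros)
    next
      case (Suc i)
      have "continuous_on UNIV (\<lambda>t::real. av i t)" "continuous_on UNIV (\<lambda>t::real. av (Suc i) t)"
        using 1 Suc \<open>k = Suc j\<close> by auto
      then show ?thesis using Suc \<open>k = Suc j\<close> by (simp add: continuous_intros)
    qed
  qed
qed

lemma bv_cont: "continuous_on UNIV (\<lambda>t::real. bv k t)"
proof (induction k rule: nat_less_induct)
  case (1 k)
  show ?case
  proof (cases k)
    case 0 then show ?thesis by simp
  next
    case (Suc j)
    show ?thesis
    proof (cases j)
      case 0 then show ?thesis using Suc by (simp add: continuous_intros)
    next
      case (Suc i)
      have "continuous_on UNIV (\<lambda>t::real. bv i t)" "continuous_on UNIV (\<lambda>t::real. bv (Suc i) t)"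
        using 1 Suc \<open>k = Suc j\<close> by auto
      then show ?thesis using Suc \<open>k = Suc j\<close> by (simp add: continuous_intros)
    qed
  qed
qed

lemma av_cont_on:
  fixes f :: "real \<Rightarrow> real"
  assumes "continuous_on S f" shows "continuous_on S (\<lambda>t. av k (f t))"
  using continuous_on_compose2[OF av_cont assms] by simp

lemma bv_cont_on:
  fixes f :: "real \<Rightarrow> real"
  assumes "continuous_on S f" shows "continuous_on S (\<lambda>t. bv k (f t))"
  using continuous_on_compose2[OF bv_cont assms] by simp

lemma DD_cont: "continuous_on S (\<lambda>t::real. DD k l t)"
  unfolding DD_def by (intro continuous_intros av_cont_on)

lemma PP_cont: "continuous_on S (\<lambda>t::real. PP k l t)"
  unfolding PP_def by (intro continuous_intros av_cont_on)

lemma AA_cont: "continuous_on S (\<lambda>t::real. AA k l t)"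
  unfolding AA_def by (intro continuous_intros bv_cont_on)

lemma DD_ne: "(t::real) \<in> {-1..1} \<Longrightarrow> DD k l t \<noteq> 0"
  using DD_pos[of t k l] by auto

lemma exp_cis: "exp (2 * of_real pi * \<i> * of_real x) = cis (2 * pi * x)"
  by (simp add: cis_conv_exp mult_ac)

lemma holo_U:
  assumes "g holomorphic_on UNIV"
  shows "(\<lambda>w. g w / Rw k l w) holomorphic_on {w. Rw k l w \<noteq> 0}"
  using assms Rw_holo[of k l] by (intro holomorphic_intros) (auto intro: holomorphic_on_subset)

lemma cball_U: "cball 0 1 \<subseteq> {w. Rw k l w \<noteq> 0}"
  using Rw_nonzero_cball by auto

lemma re_integral:
  assumes "(f has_integral y) S"
  shows "((\<lambda>x. Re (f x)) has_integral Re y) S"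
  using has_integral_linear[OF assms bounded_linear_Re] by (simp add: o_def)

lemma of_real_integral:
  assumes "(f has_integral y) S"
  shows "((\<lambda>x. complex_of_real (f x)) has_integral of_real y) S"
  using has_integral_linear[OF assms bounded_linear_of_real] by (simp add: o_def)

lemma circle_step:
  fixes G :: "real \<Rightarrow> real" and \<Psi> :: "complex \<Rightarrow> complex"
  assumes holo: "\<Psi> holomorphic_on {w. Rw k l w \<noteq> 0}"
    and fin: "finite X"
    and pt: "\<And>x. x \<in> {0..1} - X \<Longrightarrow> Re (\<Psi> (cis (2 * pi * x))) = G (cos (2 * pi * x))"
    and cG: "continuous_on {-1..1} G"
  shows "((\<lambda>t. G t / sqrt (1 - t^2)) has_integral (pi * Re (\<Psi> 0))) {-1..1}"
proof -
  have "((\<lambda>x. \<Psi> (exp (2 * of_real pi * \<i> * of_real x))) has_integral \<Psi> 0) {0..1}"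
    by (rule mean_value[OF holo open_U cball_U])
  then have I1: "((\<lambda>x. Re (\<Psi> (cis (2 * pi * x)))) has_integral Re (\<Psi> 0)) {0..1}"
    unfolding exp_cis by (rule re_integral)
  have "((\<lambda>x. G (cos (2 * pi * x))) has_integral Re (\<Psi> 0)) {0..1}"
    by (rule has_integral_spike_finite[OF fin _ I1]) (simp add: pt)
  then have "integral {0..1} (\<lambda>x. G (cos (2 * pi * x))) = Re (\<Psi> 0)" by (rule integral_unique)
  then show ?thesis using sub_lemma[OF cG] by simp
qed


lemma cancel1:
  fixes w a E :: complex
  assumes "w \<noteq> 0" "j \<le> N"
  shows "(w * a)^j * w^(N - j) / (w^N * E) = a^j / E"
proof -
  have "w^j * w^(N - j) = w^N" using assms(2) by (simp add: power_add[symmetric])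
  then have "(w * a)^j * w^(N - j) = a^j * w^N" by (simp add: power_mult_distrib algebra_simps)
  then show ?thesis using assms(1) by simp
qed

lemma cancel2:
  fixes w a s E :: complex
  assumes "w \<noteq> 0" "j + 1 \<le> N"
  shows "(w * s) * (w * a)^j * w^(N - 1 - j) / (w^N * E) = s * a^j / E"
proof -
  have "w * w^j * w^(N - 1 - j) = w^N" using assms(2)
    by (metis power_Suc power_add Suc_eq_plus1 add.commute le_add_diff_inverse2 add_diff_cancel_left' diff_diff_left)
  then have eq: "(w * s) * (w * a)^j * w^(N - 1 - j) = s * a^j * w^N" by (simp add: power_mult_distrib algebra_simps)
  show ?thesis unfolding eq using assms(1) by simp
qed

lemma cis_facts:
  fixes th :: real
  assumes "w = cis th"
  shows "w \<noteq> 0" "(w^2 + 1) / 2 = w * of_real (cos th)" "(1 - w^2) / 2 = w * (- \<i> * of_real (sin th))"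
    "Rw k l w = w^(k+l+1) * (PP k l (tw w) + sw w * AA k l (tw w))"
proof -
  show w0: "w \<noteq> 0" using assms by simp
  have "w * tw w = (w^2 + 1) / 2" using w0 by (simp add: tw_def field_simps power2_eq_square)
  then show "(w^2 + 1) / 2 = w * of_real (cos th)" using assms tw_cis by simp
  have "w * sw w = (1 - w^2) / 2" using w0 by (simp add: sw_def field_simps power2_eq_square)
  then show "(1 - w^2) / 2 = w * (- \<i> * of_real (sin th))" using assms sw_cis by simp
  show "Rw k l w = w^(k+l+1) * (PP k l (tw w) + sw w * AA k l (tw w))" by (rule Rw_eq[OF w0])
qed

lemma part2:
  assumes j: "j \<le> k + l"
  shows "((\<lambda>t. F1 (2*k+1) (2*l+1) t * complex_of_real (t^j / sqrt (1 - t\<^sup>2))) has_integral 0) {-1..1}"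
proof -
  define N where "N = k + l + 1"
  define \<Psi> where "\<Psi> w = ((w^2 + 1) / 2)^j * w^(N - j) / Rw k l w" for w
  define G where "G t = t^j * (2 * PP k l t / DD k l t)" for t :: real
  have holo: "\<Psi> holomorphic_on {w. Rw k l w \<noteq> 0}"
    unfolding \<Psi>_def[abs_def] by (rule holo_U) (auto intro!: holomorphic_intros)
  have p0: "\<Psi> 0 = 0" unfolding \<Psi>_def N_def using j by simp
  have cG: "continuous_on {-1..1} G"
    unfolding G_def[abs_def] by (intro continuous_intros PP_cont DD_cont) (simp add: DD_ne)
  have pt: "Re (\<Psi> (cis (2 * pi * x))) = G (cos (2 * pi * x))" for x
  proof -
    define th where "th = 2 * pi * x"
    define w where "w = cis th"
    note cf = cis_facts(1-3)[OF w_def] cis_facts(4)[OF w_def, of k l]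
    have "\<Psi> w = (w * of_real (cos th))^j * w^(N - j) / (w^N * (PP k l (tw w) + sw w * AA k l (tw w)))"
      unfolding \<Psi>_def cf(2) cf(4) N_def by simp
    also have "\<dots> = of_real (cos th)^j * inverse (PP k l (tw w) + sw w * AA k l (tw w))"
      using cancel1[OF cf(1), of j N] j unfolding N_def by (simp add: divide_inverse)
    finally have "\<Psi> w = of_real (cos th ^ j) * Complex (2 * PP k l (cos th) / DD k l (cos th)) (2 * (sin th * AA k l (cos th)) / DD k l (cos th))"
      unfolding w_def E_cis(2) by simp
    then show ?thesis unfolding G_def w_def th_def by simp
  qed
  have "((\<lambda>t. G t / sqrt (1 - t^2)) has_integral (pi * Re (\<Psi> 0))) {-1..1}"
    by (rule circle_step[OF holo finite.emptyI _ cG]) (simp add: pt)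
  then have "((\<lambda>t. G t / sqrt (1 - t^2)) has_integral 0) {-1..1}" unfolding p0 by simp
  then have "((\<lambda>t. (1/2) * (G t / sqrt (1 - t^2))) has_integral (1/2) * 0) {-1..1}"
    by (rule has_integral_mult_right)
  then have I0: "((\<lambda>t. complex_of_real ((1/2) * (G t / sqrt (1 - t^2)))) has_integral of_real ((1/2) * 0)) {-1..1}"
    by (rule of_real_integral)
  then have I: "((\<lambda>t. complex_of_real ((1/2) * (G t / sqrt (1 - t^2)))) has_integral 0) {-1..1}"
    by (simp only: mult_zero_right of_real_0)
  show ?thesis
  proof (rule has_integral_spike_finite[OF finite.emptyI _ I])
    fix t assume "t \<in> {-1..1::real} - {}"
    then have t: "-1 \<le> t" "t \<le> 1" by auto
    show "F1 (2*k+1) (2*l+1) t * complex_of_real (t^j / sqrt (1 - t\<^sup>2)) = complex_of_real ((1/2) * (G t / sqrt (1 - t^2)))"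
    proof -
      have r: "PP k l t / DD k l t * (t^j / sqrt (1 - t\<^sup>2)) = (1/2) * (G t / sqrt (1 - t^2))"
        unfolding G_def by simp
      show ?thesis unfolding F_line(2)[OF refl refl t] of_real_mult[symmetric] r ..
    qed
  qed
qed


lemma part3:
  assumes j: "j + 1 \<le> k + l"
  shows "((\<lambda>t. F2 (2*k+1) (2*l+1) t * complex_of_real (t^j)) has_integral 0) {-1..1}"
proof -
  define N where "N = k + l + 1"
  define \<Psi> where "\<Psi> w = ((1 - w^2) / 2) * ((w^2 + 1) / 2)^j * w^(N - 1 - j) / Rw k l w" for w
  define G where "G t = t^j * (2 * ((1 - t^2) * AA k l t) / DD k l t)" for t :: real
  have holo: "\<Psi> holomorphic_on {w. Rw k l w \<noteq> 0}"
    unfolding \<Psi>_def[abs_def] by (rule holo_U) (auto intro!: holomorphic_intros)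
  have p0: "\<Psi> 0 = 0" unfolding \<Psi>_def N_def using j by simp
  have cG: "continuous_on {-1..1} G"
    unfolding G_def[abs_def] by (intro continuous_intros AA_cont DD_cont) (simp add: DD_ne)
  have pt: "Re (\<Psi> (cis (2 * pi * x))) = G (cos (2 * pi * x))" for x
  proof -
    define th where "th = 2 * pi * x"
    define w where "w = cis th"
    note cf = cis_facts(1-3)[OF w_def] cis_facts(4)[OF w_def, of k l]
    have "\<Psi> w = (w * (- \<i> * of_real (sin th))) * (w * of_real (cos th))^j * w^(N - 1 - j) / (w^N * (PP k l (tw w) + sw w * AA k l (tw w)))"
      unfolding \<Psi>_def cf(2) cf(3) cf(4) N_def by simp
    also have "\<dots> = (- \<i> * of_real (sin th)) * of_real (cos th)^j * inverse (PP k l (tw w) + sw w * AA k l (tw w))"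
    proof -
      have jN: "j + 1 \<le> N" using j unfolding N_def by simp
      show ?thesis using cancel2[OF cf(1) jN, where s="- \<i> * of_real (sin th)" and a="of_real (cos th)"
          and E="PP k l (tw w) + sw w * AA k l (tw w)"] by (simp add: divide_inverse)
    qed
    finally have "\<Psi> w = (- \<i> * of_real (sin th)) * of_real (cos th ^ j) * Complex (2 * PP k l (cos th) / DD k l (cos th)) (2 * (sin th * AA k l (cos th)) / DD k l (cos th))"
      unfolding w_def E_cis(2) by simp
    then have "Re (\<Psi> w) = sin th * cos th ^ j * (2 * (sin th * AA k l (cos th)) / DD k l (cos th))"
      by simp
    also have "\<dots> = cos th ^ j * (2 * ((sin th)^2 * AA k l (cos th)) / DD k l (cos th))"
      by (simp add: power2_eq_square)
    also have "\<dots> = G (cos th)" unfolding G_def sin_squared_eq ..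
    finally show ?thesis unfolding w_def th_def .
  qed
  have "((\<lambda>t. G t / sqrt (1 - t^2)) has_integral (pi * Re (\<Psi> 0))) {-1..1}"
    by (rule circle_step[OF holo finite.emptyI _ cG]) (simp add: pt)
  then have "((\<lambda>t. G t / sqrt (1 - t^2)) has_integral 0) {-1..1}" unfolding p0 by simp
  then have "((\<lambda>t. (1/2) * (G t / sqrt (1 - t^2))) has_integral (1/2) * 0) {-1..1}"
    by (rule has_integral_mult_right)
  then have I0: "((\<lambda>t. complex_of_real ((1/2) * (G t / sqrt (1 - t^2)))) has_integral of_real ((1/2) * 0)) {-1..1}"
    by (rule of_real_integral)
  then have I: "((\<lambda>t. complex_of_real ((1/2) * (G t / sqrt (1 - t^2)))) has_integral 0) {-1..1}"
    by (simp only: mult_zero_right of_real_0)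
  show ?thesis
  proof (rule has_integral_spike_finite[OF finite.emptyI _ I])
    fix t assume "t \<in> {-1..1::real} - {}"
    then have t: "-1 \<le> t" "t \<le> 1" by auto
    show "F2 (2*k+1) (2*l+1) t * complex_of_real (t^j) = complex_of_real ((1/2) * (G t / sqrt (1 - t^2)))"
    proof -
      have nn: "0 \<le> 1 - t^2" using t by (simp add: abs_square_le_1)
      have r: "sqrt (1 - t\<^sup>2) * AA k l t / DD k l t * t^j = (1/2) * (G t / sqrt (1 - t^2))"
      proof (cases "1 - t^2 = 0")
        case True then show ?thesis unfolding G_def by simp
      next
        case False
        define s where "s = sqrt (1 - t^2)"
        have sp: "0 < s" using nn False unfolding s_def by simp
        have sq: "1 - t^2 = s * s" using nn unfolding s_def by simp
        have "s * AA k l t / DD k l t * t^j = (1/2) * (t^j * (2 * ((s * s) * AA k l t) / DD k l t) / s)"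
          using sp by (simp add: field_simps)
        then show ?thesis unfolding G_def s_def[symmetric] unfolding sq .
      qed
      show ?thesis unfolding F_line(3)[OF refl refl t] of_real_mult[symmetric] r ..
    qed
  qed
qed


lemma bv_0: "bv k 0 = 1"
  by (induction k "0::'a::comm_ring_1" rule: bv.induct) simp_all

lemma Rw_i: "Rw k l \<i> = - (\<i>^(k+l+2))"
proof -
  have "tw \<i> = 0" "sw \<i> = - \<i>" by (simp_all add: tw_def sw_def)
  then have "Rw k l \<i> = \<i>^(k+l+1) * (- \<i>)" unfolding Rw_eq[of \<i>, simplified] by (simp add: PP_def AA_def bv_0)
  also have "\<dots> = - (\<i>^(k+l+2))"
  proof -
    have e: "k + l + 2 = Suc (k + l + 1)" by simp
    show ?thesis by (simp only: e power_Suc2) simp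
  qed
  finally show ?thesis .
qed

lemma Rw_mi: "Rw k l (- \<i>) = - ((- \<i>)^(k+l+2))"
proof -
  have "tw (- \<i>) = 0" "sw (- \<i>) = \<i>" by (simp_all add: tw_def sw_def)
  then have "Rw k l (- \<i>) = (- \<i>)^(k+l+1) * \<i>" unfolding Rw_eq[of "- \<i>", simplified] by (simp add: PP_def AA_def bv_0)
  also have "\<dots> = - ((- \<i>)^(k+l+2))"
  proof -
    have e: "k + l + 2 = Suc (k + l + 1)" by simp
    show ?thesis by (simp only: e power_Suc2) simp
  qed
  finally show ?thesis .
qed

lemma cos_zero_set: "{x \<in> {0..1::real}. cos (2 * pi * x) = 0} \<subseteq> {1/4, 3/4}"
proof
  fix x assume "x \<in> {x \<in> {0..1::real}. cos (2 * pi * x) = 0}"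
  then have x: "0 \<le> x" "x \<le> 1" and c: "cos (2 * pi * x) = 0" by auto
  obtain i :: int where i: "2 * pi * x = of_int i * pi + pi / 2" using c cos_zero_iff_int2 by blast
  have "pi * (4 * x) = pi * (2 * of_int i + 1)" using i by (simp add: algebra_simps)
  then have "4 * x = 2 * of_int i + 1" by simp
  then have xi: "x = of_int i / 2 + 1/4" by simp
  have "-1/2 \<le> real_of_int i" "real_of_int i \<le> 3/2" using x unfolding xi by auto
  then have "i = 0 \<or> i = 1" by linarith
  then show "x \<in> {1/4, 3/4}" unfolding xi by auto
qed

lemma part1:
  shows "((\<lambda>t. F1 (2*k+1) (2*l+1) t * complex_of_real (t powi (-1) / sqrt (1 - t\<^sup>2)))
            has_integral complex_of_real (pi / 2)) {-1..1}"
proof -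
  define N where "N = k + l + 1"
  define g where "g w = w^(N+1) + Rw k l w" for w
  have gh: "g holomorphic_on UNIV" unfolding g_def[abs_def] using Rw_holo by (intro holomorphic_intros) auto
  have gi: "g \<i> = 0" unfolding g_def N_def Rw_i by (simp add: numeral_2_eq_2)
  have gmi: "g (- \<i>) = 0" unfolding g_def N_def Rw_mi by (simp add: numeral_2_eq_2)
  define g1 where "g1 z = (if z = \<i> then deriv g \<i> else (g z - g \<i>) / (z - \<i>))" for z
  have g1h: "g1 holomorphic_on UNIV" unfolding g1_def[abs_def] by (rule pole_lemma[OF gh]) simp
  define g2 where "g2 z = (if z = - \<i> then deriv g1 (- \<i>) else (g1 z - g1 (- \<i>)) / (z - (- \<i>)))" for z
  have g2h: "g2 holomorphic_on UNIV" unfolding g2_def[abs_def] by (rule pole_lemma[OF g1h]) simp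
  have g1mi: "g1 (- \<i>) = 0" unfolding g1_def using gi gmi by simp
  have g2v: "g2 z = g z / (z^2 + 1)" if "z \<noteq> \<i>" "z \<noteq> - \<i>" for z
  proof -
    have "z^2 + 1 = (z - \<i>) * (z - (- \<i>))" by (simp add: algebra_simps power2_eq_square)
    moreover have "g2 z = g1 z / (z + \<i>)" using that unfolding g2_def g1mi by simp
    moreover have "g1 z = g z / (z - \<i>)" using that unfolding g1_def gi by simp
    ultimately show ?thesis by simp
  qed
  define \<Psi> where "\<Psi> w = 2 * g2 w / Rw k l w" for w
  have holo: "\<Psi> holomorphic_on {w. Rw k l w \<noteq> 0}"
    unfolding \<Psi>_def[abs_def] by (rule holo_U) (use g2h in \<open>auto intro!: holomorphic_intros\<close>)
  have p0: "\<Psi> 0 = 2"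
  proof -
    have "g2 0 = g 0" using g2v[of 0] by simp
    also have "\<dots> = Rw k l 0" unfolding g_def by simp
    finally show ?thesis unfolding \<Psi>_def using Rw_0[of k l] by simp
  qed
  define G where "G t = 1 + 2 * (av k t * av l (-t)) / DD k l t" for t :: real
  have cG: "continuous_on {-1..1} G"
    unfolding G_def[abs_def] by (intro continuous_intros av_cont_on DD_cont) (simp_all add: DD_ne)
  have pt: "Re (\<Psi> (cis (2 * pi * x))) = G (cos (2 * pi * x))" if "x \<in> {0..1} - {1/4, 3/4}" for x
  proof -
    define th where "th = 2 * pi * x"
    define w where "w = cis th"
    define c where "c = cos th"
    define E where "E = PP k l (tw w) + sw w * AA k l (tw w)"
    note cf = cis_facts(1-3)[OF w_def] cis_facts(4)[OF w_def, of k l]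
    have c0: "c \<noteq> 0" using that cos_zero_set unfolding c_def th_def by auto
    have E0: "E \<noteq> 0" unfolding E_def w_def by (rule E_cis(3))
    have w0: "w \<noteq> 0" by (rule cf(1))
    have w21: "w^2 + 1 = 2 * w * of_real c" using cf(2) unfolding c_def by (simp add: field_simps)
    have wne: "w \<noteq> \<i>" "w \<noteq> - \<i>" using w21 w0 c0 by (auto simp: power2_eq_square)
    have "\<Psi> w = 2 * (w^(N+1) + w^N * E) / ((2 * w * of_real c) * (w^N * E))"
      unfolding \<Psi>_def g2v[OF wne] g_def cf(4) w21[symmetric] E_def N_def by simp
    also have "\<dots> = (inverse E + inverse w) / of_real c"
      using w0 E0 c0 by (simp add: field_simps)
    also have "inverse w = cis (- th)" unfolding w_def by simp
    also have "inverse E = Complex (2 * PP k l c / DD k l c) (2 * (sin th * AA k l c) / DD k l c)"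
      unfolding E_def w_def c_def by (rule E_cis(2))
    finally have "Re (\<Psi> w) = (2 * PP k l c / DD k l c + c) / c" unfolding c_def by simp
    also have "\<dots> = G c" unfolding G_def PP_def using c0 by (simp add: field_simps)
    finally show ?thesis unfolding w_def th_def c_def .
  qed
  have I1: "((\<lambda>t. G t / sqrt (1 - t^2)) has_integral (pi * Re (\<Psi> 0))) {-1..1}"
    by (rule circle_step[where X="{1/4, 3/4}", OF holo _ pt cG]) simp
  have I2: "((\<lambda>t. 1 / sqrt (1 - t^2)) has_integral (pi * Re ((\<lambda>w. 1) 0))) {-1..1}"
    by (rule circle_step[of "\<lambda>w. 1" k l "{}"]) (auto intro: holomorphic_intros)
  have "((\<lambda>t. G t / sqrt (1 - t^2) - 1 / sqrt (1 - t^2)) has_integral (pi * 2 - pi * 1)) {-1..1}"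
    using has_integral_diff[OF I1 I2] unfolding p0 by simp
  then have "((\<lambda>t. (1/2) * (G t / sqrt (1 - t^2) - 1 / sqrt (1 - t^2))) has_integral (1/2) * (pi * 2 - pi * 1)) {-1..1}"
    by (rule has_integral_mult_right)
  then have I0: "((\<lambda>t. complex_of_real ((1/2) * (G t / sqrt (1 - t^2) - 1 / sqrt (1 - t^2)))) has_integral
       of_real ((1/2) * (pi * 2 - pi * 1))) {-1..1}"
    by (rule of_real_integral)
  have v: "(1/2) * (pi * 2 - pi * 1) = pi / 2" by simp
  show ?thesis
  proof (rule has_integral_spike_finite[of "{0}", OF _ _ I0[unfolded v]])
    fix t assume "t \<in> {-1..1::real} - {0}"
    then have t: "-1 \<le> t" "t \<le> 1" and t0: "t \<noteq> 0" by auto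
    have r: "PP k l t / DD k l t * (t powi (-1) / sqrt (1 - t\<^sup>2)) = (1/2) * (G t / sqrt (1 - t^2) - 1 / sqrt (1 - t^2))"
    proof -
      define s where "s = sqrt (1 - t^2)"
      have D0: "DD k l t \<noteq> 0" using DD_ne t by auto
      have "t * av k t * av l (- t) / DD k l t * (inverse t / s) = (1/2) * ((1 + 2 * (av k t * av l (- t)) / DD k l t) / s - 1 / s)"
        using t0 D0 by (cases "s = 0") (simp_all add: field_simps)
      then show ?thesis unfolding G_def PP_def power_int_minus1_right s_def .
    qed
    show "F1 (2*k+1) (2*l+1) t * complex_of_real (t powi (-1) / sqrt (1 - t\<^sup>2)) =
       complex_of_real ((1/2) * (G t / sqrt (1 - t^2) - 1 / sqrt (1 - t^2)))"
      unfolding F_line(2)[OF refl refl t] of_real_mult[symmetric] r ..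
  qed simp
qed

theorem theorem1:
  fixes n m :: nat
  assumes "odd n" and "odd m"
  shows "((\<lambda>t. F1 n m t * complex_of_real (t powi (-1) / sqrt (1 - t\<^sup>2)))
            has_integral complex_of_real (pi / 2)) {-1..1}
     \<and> (\<forall>j::nat. 2 * j + 2 \<le> m + n \<longrightarrow>
           ((\<lambda>t. F1 n m t * complex_of_real (t ^ j / sqrt (1 - t\<^sup>2))) has_integral 0) {-1..1})
     \<and> (\<forall>j::nat. 2 * j + 4 \<le> m + n \<longrightarrow>
           ((\<lambda>t. F2 n m t * complex_of_real (t ^ j)) has_integral 0) {-1..1})"
proof -
  obtain k where k: "n = 2 * k + 1" using assms(1) oddE by blast
  obtain l where l: "m = 2 * l + 1" using assms(2) oddE by blast
  have c1: "((\<lambda>t. F1 n m t * complex_of_real (t powi (-1) / sqrt (1 - t\<^sup>2)))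
            has_integral complex_of_real (pi / 2)) {-1..1}"
    unfolding k l by (rule part1)
  have c2: "((\<lambda>t. F1 n m t * complex_of_real (t ^ j / sqrt (1 - t\<^sup>2))) has_integral 0) {-1..1}"
    if "2 * j + 2 \<le> m + n" for j
  proof -
    have "j \<le> k + l" using that k l by simp
    then show ?thesis unfolding k l by (rule part2)
  qed
  have c3: "((\<lambda>t. F2 n m t * complex_of_real (t ^ j)) has_integral 0) {-1..1}"
    if "2 * j + 4 \<le> m + n" for j
  proof -
    have "j + 1 \<le> k + l" using that k l by simp
    then show ?thesis unfolding k l by (rule part3)
  qed
  show ?thesis using c1 c2 c3 by blast
qed

end
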